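(* Let $\rho>0$, $\epsilon_0>0$, and $0<\lambda_1<\lambda_2$ with $\lambda_1(1+\epsilon_0)\neq\lambda_2$. For $\beta$ with $\frac{\epsilon_0}{1+\epsilon_0}<\beta<1$ (equivalently $\beta>(1-\beta)\epsilon_0$, $\beta<1$) define $A(\beta)=\frac{\epsilon_0}{\rho[\beta-(1-\beta)\epsilon_0]}$, $B(\beta)=\frac{\epsilon_0}{\rho(1-\beta)}$, $\zeta(\beta)=\max\{A(\beta),B(\beta)\}$. Then the minimization problem $$\min_\beta\ 1-e^{-(\lambda_2A(\beta)+\lambda_1\zeta(\beta))}\quad\text{s.t. } 0\le\beta\le1,\ \beta>(1-\beta)\epsilon_0$$ has optimal solution $$\beta^*=\frac{\sqrt{1+\epsilon_0}\,(\epsilon_0\lambda_1-\lambda_2)+\sqrt{\lambda_1\lambda_2}}{\sqrt{1+\epsilon_0}\,[\lambda_1(1+\epsilon_0)-\lambda_2]}.$$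
   Context: Interpretation: downlink two-user NOMA with users at distances $d_1<d_2$, $\lambda_k=d_k^\alpha$ ($\alpha>0$ the path loss exponent), transmit SNR $\rho$, target SNR $\epsilon_0=2^{R_0^*}-1$, and $\beta$ the power fraction given to the farther user; the objective is the common outage probability when the users are ordered correctly. At $\beta=1$, $B$ is infinite and the objective is interpreted as $1$. *)

theory Defs
  imports Complex_Main
begin

definition noma_A :: "real \<Rightarrow> real \<Rightarrow> real \<Rightarrow> real" where
  "noma_A rho eps0 b = eps0 / (rho * (b - (1 - b) * eps0))"

definition noma_B :: "real \<Rightarrow> real \<Rightarrow> real \<Rightarrow> real" where
  "noma_B rho eps0 b = eps0 / (rho * (1 - b))"

definition noma_zeta :: "real \<Rightarrow> real \<Rightarrow> real \<Rightarrow> real" where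
  "noma_zeta rho eps0 b = max (noma_A rho eps0 b) (noma_B rho eps0 b)"

text \<open>Objective; at beta = 1 the quantity B is infinite and the objective is taken to be 1.\<close>
definition noma_obj :: "real \<Rightarrow> real \<Rightarrow> real \<Rightarrow> real \<Rightarrow> real \<Rightarrow> real" where
  "noma_obj rho eps0 l1 l2 b =
     (if b = 1 then 1
      else 1 - exp (- (l2 * noma_A rho eps0 b + l1 * noma_zeta rho eps0 b)))"

definition noma_feasible :: "real \<Rightarrow> real \<Rightarrow> bool" where
  "noma_feasible eps0 b \<longleftrightarrow> 0 \<le> b \<and> b \<le> 1 \<and> b > (1 - b) * eps0"

end

theory Submission
  imports Defs
begin

theorem corollary2:
  fixes rho eps0 l1 l2 :: real
  assumes "rho > 0" and "eps0 > 0" and "0 < l1" and "l1 < l2"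
    and "l1 * (1 + eps0) \<noteq> l2"
  defines "bstar \<equiv> (sqrt (1 + eps0) * (eps0 * l1 - l2) + sqrt (l1 * l2))
                 / (sqrt (1 + eps0) * (l1 * (1 + eps0) - l2))"
  shows "noma_feasible eps0 bstar \<and>
         (\<forall>b. noma_feasible eps0 b \<longrightarrow> noma_obj rho eps0 l1 l2 bstar \<le> noma_obj rho eps0 l1 l2 b)"
proof -
  define a where "a = sqrt l1"
  define c where "c = sqrt l2"
  define r where "r = sqrt (1 + eps0)"
  have a0: "a > 0" using assms(3) by (simp add: a_def)
  have c0: "c > 0" using assms(3,4) by (simp add: c_def)
  have r1: "r > 1" using assms(2) by (simp add: r_def)
  have aa: "a^2 = l1" using assms(3) by (simp add: a_def)
  have cc: "c^2 = l2" using assms(3,4) by (simp add: c_def)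
  have rr: "r^2 = 1 + eps0" using assms(2) by (simp add: r_def)
  have ac: "sqrt (l1 * l2) = a * c" by (simp add: a_def c_def real_sqrt_mult)
  have ne: "r^2 * a^2 - c^2 \<noteq> 0" using assms(5) aa cc rr by (auto simp: algebra_simps)
  have ne2: "c + r * a \<noteq> 0" using a0 c0 r1 by (smt (verit) mult_pos_pos)
  define vs where "vs = a / (r * (c + r * a))"
  define us where "us = c / (c + r * a)"
  have cra: "c + r * a > 0" using a0 c0 r1 by (smt (verit) mult_pos_pos)
  have vs0: "vs > 0" unfolding vs_def using a0 r1 cra by simp
  have us0: "us > 0" unfolding us_def using c0 cra by simp
  have bs: "bstar = 1 - vs"
  proof -
    have "bstar = (r * (eps0 * a^2 - c^2) + a * c) / (r * (r^2 * a^2 - c^2))"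
      unfolding bstar_def using aa cc rr ac r_def by (simp add: algebra_simps)
    also have "\<dots> = 1 - vs"
    proof -
      have e: "eps0 = r^2 - 1" using rr by simp
      have "r * (r^2 * a^2 - c^2) * (1 - vs) = r * (r^2 * a^2 - c^2) - (r*a - c) * a"
      proof -
        have f: "r * (r^2 * a^2 - c^2) = (r*a - c) * (r * (c + r * a))"
          by (simp add: algebra_simps power2_eq_square)
        have "(r*a - c) * (r * (c + r * a)) * vs = (r*a - c) * a"
          unfolding vs_def using ne2 r1 by simp
        thus ?thesis using f by (simp add: algebra_simps power2_eq_square)
      qed
      also have "\<dots> = r * (eps0 * a^2 - c^2) + a * c"
        unfolding e by (simp add: algebra_simps power2_eq_square)
      finally show ?thesis using ne r1 by (simp add: field_simps)
    qed
    finally show ?thesis .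
  qed
  have usvs: "us + r^2 * vs = 1"
  proof -
    have "r^2 * vs = (r * a) / (c + r * a)"
      unfolding vs_def using r1 by (simp add: power2_eq_square)
    thus ?thesis unfolding us_def using ne2 by (simp add: add_divide_distrib[symmetric])
  qed
  have vsus: "vs \<le> us"
  proof -
    have "a \<le> r * c" using a0 c0 r1 aa cc assms(4)
      by (smt (verit) mult_le_cancel_right1 power_mono real_sqrt_le_iff a_def c_def real_sqrt_pow2 less_imp_le)
    hence "a / (r * (c + r * a)) \<le> r * c / (r * (c + r * a))"
      using cra r1 by (intro divide_right_mono) auto
    thus ?thesis unfolding vs_def us_def using r1 by simp
  qed
  have bsne: "bstar \<noteq> 1" using bs vs0 by simp
  have ustar: "bstar - (1 - bstar) * eps0 = us"
    using usvs rr unfolding bs by (simp add: algebra_simps)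
  have feas: "noma_feasible eps0 bstar"
    unfolding noma_feasible_def using ustar us0 bs vs0 usvs rr r1 assms(2)
    by (smt (verit) mult_nonneg_nonneg zero_le_power2)
  have Fstar: "l2 * noma_A rho eps0 bstar + l1 * noma_zeta rho eps0 bstar
      = eps0 / rho * (c + r * a)^2"
  proof -
    have "noma_A rho eps0 bstar = eps0 / rho * (1 / us)"
      unfolding noma_A_def ustar by simp
    moreover have "noma_B rho eps0 bstar = eps0 / rho * (1 / vs)"
      unfolding noma_B_def using bs by simp
    moreover have "1 / us \<le> 1 / vs" using vsus vs0 by (simp add: frac_le)
    ultimately have "noma_zeta rho eps0 bstar = eps0 / rho * (1 / vs)"
    proof -
      have "eps0 / rho * (1 / us) \<le> eps0 / rho * (1 / vs)"
        using \<open>1 / us \<le> 1 / vs\<close> assms(1,2) by (intro mult_left_mono) auto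
      thus ?thesis unfolding noma_zeta_def
        using \<open>noma_A rho eps0 bstar = _\<close> \<open>noma_B rho eps0 bstar = _\<close> by simp
    qed
    moreover have "l2 * (1/us) + l1 * (1/vs) = (c + r * a)^2"
      unfolding us_def vs_def using ne2 a0 c0 r1 aa[symmetric] cc[symmetric]
      by (simp add: field_simps power2_eq_square)
    ultimately show ?thesis
      using \<open>noma_A rho eps0 bstar = _\<close>
      by (metis (no_types, lifting) distrib_left mult.left_commute)
  qed
  have main: "noma_obj rho eps0 l1 l2 bstar \<le> noma_obj rho eps0 l1 l2 b"
    if fb: "noma_feasible eps0 b" for b
  proof (cases "b = 1")
    case True
    then show ?thesis unfolding noma_obj_def using bsne by simp
  next
    case False
    define u where "u = b - (1 - b) * eps0"
    define v where "v = 1 - b"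
    have u0: "u > 0" using fb unfolding noma_feasible_def u_def by simp
    have v0: "v > 0" using fb False unfolding noma_feasible_def v_def by simp
    have uv: "u + r^2 * v = 1" unfolding u_def v_def rr by (simp add: algebra_simps)
    have key: "(c + r * a)^2 \<le> l2 / u + l1 / v"
    proof -
      have sq: "0 \<le> (c * r * v - a * u)^2" by simp
      have id: "(c^2 * v + a^2 * u) * (u + r^2 * v) - (c + r * a)^2 * (u * v) = (c * r * v - a * u)^2"
        by (simp add: algebra_simps power2_eq_square)
      have "(c + r * a)^2 * (u * v) \<le> (l2 * v + l1 * u)"
      proof -
        have id2: "l2 * v + l1 * u - (c + r * a)^2 * (u * v) = (c * r * v - a * u)^2"
          using id uv aa cc by simp
        show ?thesis using id2 sq by linarith
      qed
      thus ?thesis using u0 v0 by (simp add: field_simps)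
    qed
    have A: "noma_A rho eps0 b = eps0 / rho * (1 / u)"
      unfolding noma_A_def u_def by simp
    have B: "noma_B rho eps0 b = eps0 / rho * (1 / v)"
      unfolding noma_B_def v_def by simp
    have er: "eps0 / rho > 0" using assms(1,2) by simp
    have "l2 * noma_A rho eps0 b + l1 * noma_zeta rho eps0 b
        \<ge> l2 * noma_A rho eps0 b + l1 * noma_B rho eps0 b"
      unfolding noma_zeta_def using assms(3) by (simp add: mult_left_mono)
    moreover have "l2 * noma_A rho eps0 b + l1 * noma_B rho eps0 b
        = eps0 / rho * (l2 / u + l1 / v)" unfolding A B by (simp add: algebra_simps)
    moreover have "eps0 / rho * (c + r * a)^2 \<le> eps0 / rho * (l2 / u + l1 / v)"
      using key er by (intro mult_left_mono) auto
    ultimately have "l2 * noma_A rho eps0 bstar + l1 * noma_zeta rho eps0 bstar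
        \<le> l2 * noma_A rho eps0 b + l1 * noma_zeta rho eps0 b"
      using Fstar by linarith
    then show ?thesis unfolding noma_obj_def using bsne False by simp
  qed
  show ?thesis using feas main by blast
qed

end
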